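(* Let $G$ be a simple graph with $n$ vertices, let $G'$ be obtained from $G$ by a symmetric $\mathcal K_{xy}$-operation, and let $f:\mathbb R^n\to\mathbb R$ be a convex symmetric function. Then $f[G]\le f[G']$. In particular $\sum_{v\in V(G)}d(v,G)^s\le\sum_{v\in V(G')}d(v,G')^s$ for every positive integer $s$.
   Context: $d(v,G)$ is the degree of $v$ in $G$, and $f[G]=f(d(v_1,G),\dots,d(v_n,G))$ for any ordering $v_1,\dots,v_n$ of $V(G)$. A function $f:\mathbb R^n\to\mathbb R$ is symmetric if it is invariant under permuting coordinates; a symmetric $f$ is called convex if for all $x\in\mathbb R^n$ with nonnegative coordinates, all indices $r\ne s$ with $x_r\ge x_s$, and all $\varepsilon\ge0$, one has $f(x+\varepsilon e_r)\ge f(x+\varepsilon e_s)$ ($e_i$ the standard unit vectors). $\mathcal K_{xy}$-operation: let $G$ be a simple graph, $x\ne y$ vertices, $\mathcal K$ an induced subgraph of $G$ containing $x$ and $y$, and $N(v)$ the neighbourhood of $v$. Put $X=N(x)\setminus(V(\mathcal K)\cup N(y))$, $Y=N(y)\setminus(V(\mathcal K)\cup N(x))$, $[x,X]=\{xv:v\in X\}$, $[y,X]=\{yv:v\in X\}$, $[y,Y]=\{yv:v\in Y\}$. The graph $\mathcal K_{xy}(G)=(G-[x,X])\cup[y,X]$ (on the same vertex set) is obtained from $G$ by the $\mathcal K_{xy}$-operation. The operation is called symmetric if the graph $G-([x,X]\cup[y,Y])$ has an automorphism $\alpha$ with $\alpha(x)=y$, $\alpha(y)=x$, $\alpha(V(\mathcal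 K))=V(\mathcal K)$, and $\alpha(v)=v$ for every $v\in X\cup Y$. *)

theory Defs
  imports "HOL-Analysis.Analysis"
begin

definition simple_graph :: "('a \<Rightarrow> 'a \<Rightarrow> bool) \<Rightarrow> bool" where
  "simple_graph E \<longleftrightarrow> (\<forall>u v. E u v \<longrightarrow> E v u) \<and> (\<forall>v. \<not> E v v)"

definition nbhd :: "('a \<Rightarrow> 'a \<Rightarrow> bool) \<Rightarrow> 'a \<Rightarrow> 'a set" where
  "nbhd E v = {u. E v u}"

definition deg :: "('a \<Rightarrow> 'a \<Rightarrow> bool) \<Rightarrow> 'a \<Rightarrow> nat" where
  "deg E v = card (nbhd E v)"

text \<open>Degree vector, indexed by the vertices (ordering = the index type itself).\<close>
definition degvec :: "('n::finite \<Rightarrow> 'n \<Rightarrow> bool) \<Rightarrow> real ^ 'n" where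
  "degvec E = (\<chi> v. real (deg E v))"

text \<open>Edge set [z,S] = {zv : v in S}, as a set of 2-element vertex sets.\<close>
definition star_edges :: "'a \<Rightarrow> 'a set \<Rightarrow> 'a set set" where
  "star_edges z S = {{z, w} | w. w \<in> S}"

definition remove_edges :: "('a \<Rightarrow> 'a \<Rightarrow> bool) \<Rightarrow> 'a set set \<Rightarrow> 'a \<Rightarrow> 'a \<Rightarrow> bool" where
  "remove_edges E F = (\<lambda>u v. E u v \<and> {u, v} \<notin> F)"

definition add_edges :: "('a \<Rightarrow> 'a \<Rightarrow> bool) \<Rightarrow> 'a set set \<Rightarrow> 'a \<Rightarrow> 'a \<Rightarrow> bool" where
  "add_edges E F = (\<lambda>u v. E u v \<or> (u \<noteq> v \<and> {u, v} \<in> F))"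

definition Kxy_X :: "('a \<Rightarrow> 'a \<Rightarrow> bool) \<Rightarrow> 'a set \<Rightarrow> 'a \<Rightarrow> 'a \<Rightarrow> 'a set" where
  "Kxy_X E K x y = nbhd E x - (K \<union> nbhd E y)"

text \<open>The K_xy-operation; the induced subgraph K is given by its vertex set.\<close>
definition Kxy_op :: "('a \<Rightarrow> 'a \<Rightarrow> bool) \<Rightarrow> 'a set \<Rightarrow> 'a \<Rightarrow> 'a \<Rightarrow> 'a \<Rightarrow> 'a \<Rightarrow> bool" where
  "Kxy_op E K x y =
     add_edges (remove_edges E (star_edges x (Kxy_X E K x y))) (star_edges y (Kxy_X E K x y))"

definition graph_automorphism :: "('a \<Rightarrow> 'a \<Rightarrow> bool) \<Rightarrow> ('a \<Rightarrow> 'a) \<Rightarrow> bool" where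
  "graph_automorphism E \<alpha> \<longleftrightarrow> bij \<alpha> \<and> (\<forall>u v. E u v \<longleftrightarrow> E (\<alpha> u) (\<alpha> v))"

definition symmetric_Kxy :: "('a \<Rightarrow> 'a \<Rightarrow> bool) \<Rightarrow> 'a set \<Rightarrow> 'a \<Rightarrow> 'a \<Rightarrow> bool" where
  "symmetric_Kxy E K x y \<longleftrightarrow>
     (let X = Kxy_X E K x y; Y = Kxy_X E K y x in
      \<exists>\<alpha>. graph_automorphism (remove_edges E (star_edges x X \<union> star_edges y Y)) \<alpha>
          \<and> \<alpha> x = y \<and> \<alpha> y = x \<and> \<alpha> ` K = K \<and> (\<forall>v \<in> X \<union> Y. \<alpha> v = v))"

text \<open>Symmetric functions R^n -> R (n = CARD('n)).\<close>
definition symmetric_fun :: "(real ^ 'n::finite \<Rightarrow> real) \<Rightarrow> bool" where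
  "symmetric_fun f \<longleftrightarrow> (\<forall>p x. bij p \<longrightarrow> f (\<chi> i. x $ p i) = f x)"

definition convex_sym :: "(real ^ 'n::finite \<Rightarrow> real) \<Rightarrow> bool" where
  "convex_sym f \<longleftrightarrow> (\<forall>x r s \<epsilon>. (\<forall>i. 0 \<le> x $ i) \<longrightarrow> r \<noteq> s \<longrightarrow> x $ s \<le> x $ r \<longrightarrow> 0 \<le> \<epsilon> \<longrightarrow>
       f (x + \<epsilon> *\<^sub>R axis r 1) \<ge> f (x + \<epsilon> *\<^sub>R axis s 1))"

end

theory Submission
  imports Defs
begin

lemma pow_incr_diff:
  fixes t1 t2 A :: real
  assumes "0 \<le> t1" "t1 \<le> t2" "0 \<le> A"
  shows "(t1 + A)^s - t1^s \<le> (t2 + A)^s - t2^s"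
proof (induction s)
  case 0 then show ?case by simp
next
  case (Suc s)
  have g0: "0 \<le> (t1 + A)^s - t1^s" using assms by (simp add: power_mono)
  have e: "\<And>t. (t + A)^Suc s - t^Suc s = (t + A) * ((t + A)^s - t^s) + A * t^s"
    by (simp add: algebra_simps)
  have "(t1 + A) * ((t1 + A)^s - t1^s) \<le> (t2 + A) * ((t2 + A)^s - t2^s)"
    using Suc.IH g0 assms by (intro mult_mono) auto
  moreover have "A * t1^s \<le> A * t2^s"
    using assms by (intro mult_left_mono power_mono) auto
  ultimately show ?case unfolding e by linarith
qed

lemma sum_split2:
  fixes g :: "'n::finite \<Rightarrow> real"
  assumes "x \<noteq> y"
  shows "(\<Sum>v\<in>UNIV. g v) = g x + g y + (\<Sum>v\<in>UNIV - {x, y}. g v)"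
proof -
  have "(\<Sum>v\<in>UNIV. g v) = g x + (\<Sum>v\<in>UNIV - {x}. g v)"
    by (simp add: sum.remove)
  also have "(\<Sum>v\<in>UNIV - {x}. g v) = g y + (\<Sum>v\<in>UNIV - {x} - {y}. g v)"
    using assms by (subst sum.remove[of _ y]) auto
  finally show ?thesis by (simp add: Diff_insert2[symmetric] insert_commute)
qed

theorem mainTheorem15:
  fixes E :: "'n::finite \<Rightarrow> 'n \<Rightarrow> bool" and K :: "'n set" and x y :: 'n
    and f :: "real ^ 'n \<Rightarrow> real"
  assumes "simple_graph E"
    and "x \<noteq> y" and "x \<in> K" and "y \<in> K"
    and "symmetric_Kxy E K x y"
    and "symmetric_fun f" and "convex_sym f"
  shows "f (degvec E) \<le> f (degvec (Kxy_op E K x y)) \<and>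
         (\<forall>s::nat. s > 0 \<longrightarrow>
           (\<Sum>v\<in>UNIV. real (deg E v) ^ s) \<le> (\<Sum>v\<in>UNIV. real (deg (Kxy_op E K x y) v) ^ s))"
proof -
  define X where "X = Kxy_X E K x y"
  define Y where "Y = Kxy_X E K y x"
  define G' where "G' = Kxy_op E K x y"
  have sym: "\<And>u v. E u v \<Longrightarrow> E v u" and irr: "\<And>v. \<not> E v v"
    using assms(1) unfolding simple_graph_def by auto
  have X: "X = nbhd E x - (K \<union> nbhd E y)" unfolding X_def Kxy_X_def by simp
  have Y: "Y = nbhd E y - (K \<union> nbhd E x)" unfolding Y_def Kxy_X_def by simp
  have G'u: "G' u v = ((E u v \<and> \<not> (u = x \<and> v \<in> X) \<and> \<not> (v = x \<and> u \<in> X))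
                 \<or> (u \<noteq> v \<and> ((u = y \<and> v \<in> X) \<or> (v = y \<and> u \<in> X))))" for u v
    unfolding G'_def Kxy_op_def add_edges_def remove_edges_def star_edges_def X_def[symmetric]
    using assms(2,3,4) X irr by (auto simp: doubleton_eq_iff)
  have xX: "x \<notin> X" "y \<notin> X" "x \<notin> Y" "y \<notin> Y" using X Y assms(3,4) by auto
  have nx': "nbhd G' x = nbhd E x - X"
    unfolding nbhd_def using G'u xX assms(2) by auto
  have ny': "nbhd G' y = nbhd E y \<union> X"
    unfolding nbhd_def using G'u xX assms(2) X by (auto simp: nbhd_def)
  have XN: "X \<subseteq> nbhd E x" "Y \<subseteq> nbhd E y" using X Y by auto
  have dx': "deg G' x = deg E x - card X"
    unfolding deg_def nx' using XN by (simp add: card_Diff_subset)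
  have dy': "deg G' y = deg E y + card X"
    unfolding deg_def ny' using X by (subst card_Un_disjoint) (auto simp: nbhd_def)
  have aX: "card X \<le> deg E x" unfolding deg_def using XN by (simp add: card_mono)
  have dv': "deg G' v = deg E v" if "v \<noteq> x" "v \<noteq> y" for v
  proof (cases "v \<in> X")
    case True
    then have ex: "E v x" "\<not> E v y" using X sym by (auto simp: nbhd_def)
    have "nbhd G' v = insert y (nbhd E v - {x})"
      unfolding nbhd_def using G'u that True assms(2) by auto
    then have "card (nbhd G' v) = card (nbhd E v - {x}) + 1"
      using ex by (simp add: nbhd_def)
    also have "\<dots> = card (nbhd E v)"
    proof -
      have "x \<in> nbhd E v" using ex by (simp add: nbhd_def)
      then have "card (nbhd E v) > 0" by (auto simp: card_gt_0_iff)
      then show ?thesis using \<open>x \<in> nbhd E v\<close> by (simp add: card_Diff_singleton)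
    qed
    finally show ?thesis unfolding deg_def .
  next
    case False
    have "nbhd G' v = nbhd E v"
      unfolding nbhd_def using G'u that False assms(2) by auto
    then show ?thesis unfolding deg_def by simp
  qed
  obtain \<alpha> where aut: "graph_automorphism (remove_edges E (star_edges x X \<union> star_edges y Y)) \<alpha>"
    and axy: "\<alpha> x = y"
    using assms(5) unfolding symmetric_Kxy_def Let_def X_def Y_def by blast
  define H where "H = remove_edges E (star_edges x X \<union> star_edges y Y)"
  have Hu: "H u v = (E u v \<and> \<not> (u = x \<and> v \<in> X) \<and> \<not> (v = x \<and> u \<in> X)
                 \<and> \<not> (u = y \<and> v \<in> Y) \<and> \<not> (v = y \<and> u \<in> Y))" for u v
    unfolding H_def remove_edges_def star_edges_def
    using assms(2) xX irr by (auto simp: doubleton_eq_iff)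
  have hx: "nbhd H x = nbhd E x - X" unfolding nbhd_def using Hu xX assms(2) by auto
  have hy: "nbhd H y = nbhd E y - Y" unfolding nbhd_def using Hu xX assms(2) by auto
  have bij: "bij \<alpha>" and hom: "\<And>u v. H u v = H (\<alpha> u) (\<alpha> v)"
    using aut unfolding graph_automorphism_def H_def by auto
  have "nbhd H y = \<alpha> ` nbhd H x"
  proof
    show "\<alpha> ` nbhd H x \<subseteq> nbhd H y" using hom axy by (auto simp: nbhd_def)
    show "nbhd H y \<subseteq> \<alpha> ` nbhd H x"
    proof
      fix u assume "u \<in> nbhd H y"
      obtain w where "u = \<alpha> w" using bij by (metis bij_pointE)
      then show "u \<in> \<alpha> ` nbhd H x" using \<open>u \<in> nbhd H y\<close> hom axy by (auto simp: nbhd_def)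
    qed
  qed
  then have "card (nbhd H y) = card (nbhd H x)"
    using bij by (simp add: card_image bij_is_inj inj_on_subset[OF bij_is_inj[OF bij]])
  then have dxy: "deg E x - card X = deg E y - card Y"
    unfolding hx hy deg_def using XN by (simp add: card_Diff_subset)
  have bY: "card Y \<le> deg E y" unfolding deg_def using XN by (simp add: card_mono)
  define d where "d = deg E x - card X"
  define a where "a = card X"
  define b where "b = card Y"
  have Dx: "deg E x = d + a" and Dy: "deg E y = d + b" and D'x: "deg G' x = d"
    and D'y: "deg G' y = d + b + a"
    using dxy aX bY dx' dy' unfolding d_def a_def b_def by auto
  define z where "z = (\<chi> v. if v = x then real d else real (deg E v))"
  have e1: "degvec E = z + real a *\<^sub>R axis x 1"
    unfolding vec_eq_iff z_def degvec_def axis_def using Dx by auto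
  have e2: "degvec G' = z + real a *\<^sub>R axis y 1"
    unfolding vec_eq_iff z_def degvec_def axis_def using Dy D'x D'y dv' assms(2) by auto
  have "f (z + real a *\<^sub>R axis y 1) \<ge> f (z + real a *\<^sub>R axis x 1)"
    using assms(7) assms(2) Dy unfolding convex_sym_def
    by (erule_tac x=z in allE, erule_tac x=y in allE, erule_tac x=x in allE,
        erule_tac x="real a" in allE) (auto simp: z_def)
  then have p1: "f (degvec E) \<le> f (degvec G')" using e1 e2 by simp
  have p2: "(\<Sum>v\<in>UNIV. real (deg E v) ^ s) \<le> (\<Sum>v\<in>UNIV. real (deg G' v) ^ s)" for s
  proof -
    have rest: "(\<Sum>v\<in>UNIV - {x, y}. real (deg E v) ^ s) = (\<Sum>v\<in>UNIV - {x, y}. real (deg G' v) ^ s)"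
      using dv' by (intro sum.cong) auto
    have "(real d + real a)^s - real d ^ s \<le> ((real d + real b) + real a)^s - (real d + real b)^s"
      by (rule pow_incr_diff) auto
    then show ?thesis
      using rest Dx Dy D'x D'y
      by (simp add: sum_split2[OF assms(2), of "\<lambda>v. real (deg E v) ^ s"]
          sum_split2[OF assms(2), of "\<lambda>v. real (deg G' v) ^ s"] algebra_simps)
  qed
  show ?thesis using p1 p2 unfolding G'_def by blast
qed

end
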